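(* Let $n\ge 2$, let $R$ be the full, complete rooted binary tree whose leaves are $1,\dots,n$ from left to right, and let $T$ be any full rooted binary tree whose leaves are $1,\dots,n$ from left to right. Let $p,s$ be two distinct nodes of $T$, and let $a,b$ be nodes of $R$ with $a\in X_{I_T(p)}$ and $b\in X_{I_T(s)}$. If $a\preceq_R b$, then $p\preceq_T s$ or $s\preceq_T p$. Moreover, if $a\prec_R b$, then $p\prec_T s$.
   Context: A rooted binary tree is full if every internal node has exactly two children, and complete if all levels are completely filled except possibly the last, where leaves are left-aligned; trees here are ordered (children are left/right), so leaves are read left to right. For a node $x$ of such a tree $T$, $I_T(x)$ denotes the set of leaves of the subtree rooted at $x$; it is an interval of $[n]$. For an interval $I\subseteq[n]$, $X_I$ denotes the (unique) minimum-cardinality set of nodes of $R$ such that the leaf sets $I_R(x)$, $x\in X_I$, partition $I$. In a rooted tree, $u\prec u'$ means $u$ is a strict ancestor of $u'$, and $u\preceq u'$ means $u=u'$ or $u\prec u'$. *)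

theory Defs
  imports Main "HOL-Library.Sublist"
begin

text \<open>Every tree of this datatype is full:
  each internal node has exactly two children. Nodes are addressed by their path from
  the root (False = left child, True = right child); the ancestor relation u \<preceq> u'
  is then the prefix relation on paths.\<close>

datatype btree = Leaf | Node btree btree

fun nleaves :: "btree \<Rightarrow> nat" where
  "nleaves Leaf = 1"
| "nleaves (Node l r) = nleaves l + nleaves r"

fun nodes :: "btree \<Rightarrow> bool list set" where
  "nodes Leaf = {[]}"
| "nodes (Node l r) = {[]} \<union> Cons False ` nodes l \<union> Cons True ` nodes r"

fun height :: "btree \<Rightarrow> nat" where
  "height Leaf = 0"
| "height (Node l r) = Suc (max (height l) (height r))"

text \<open>Leaf set of the subtree rooted at the node with path p, when the leaves of the
  whole tree are labelled k+1, k+2, ... from left to right. With k = 0 the leaves are 1..n.\<close>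
fun lvs :: "btree \<Rightarrow> nat \<Rightarrow> bool list \<Rightarrow> nat set" where
  "lvs t k [] = {k+1..k + nleaves t}"
| "lvs Leaf k (b # p) = {}"
| "lvs (Node l r) k (False # p) = lvs l k p"
| "lvs (Node l r) k (True # p) = lvs r (k + nleaves l) p"

definition leafset :: "btree \<Rightarrow> bool list \<Rightarrow> nat set" where
  "leafset t p = lvs t 0 p"

text \<open>Left-to-right position of a node within its level.\<close>
definition pos :: "bool list \<Rightarrow> nat" where
  "pos p = foldl (\<lambda>a b. 2 * a + (if b then 1 else 0)) 0 p"

text \<open>Complete: all levels above the last are completely filled, and on every level the
  nodes present are left-aligned.\<close>
definition complete :: "btree \<Rightarrow> bool" where
  "complete t \<longleftrightarrow>
     (\<forall>q. length q < height t \<longrightarrow> q \<in> nodes t) \<and>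
     (\<forall>p \<in> nodes t. \<forall>q. length q = length p \<and> pos q \<le> pos p \<longrightarrow> q \<in> nodes t)"

definition partitions :: "btree \<Rightarrow> nat set \<Rightarrow> bool list set \<Rightarrow> bool" where
  "partitions R I X \<longleftrightarrow> X \<subseteq> nodes R \<and>
     (\<forall>x\<in>X. \<forall>y\<in>X. x \<noteq> y \<longrightarrow> leafset R x \<inter> leafset R y = {}) \<and>
     (\<Union>x\<in>X. leafset R x) = I"

text \<open>X_I: the (unique) minimum-cardinality such set.\<close>
definition XI :: "btree \<Rightarrow> nat set \<Rightarrow> bool list set" where
  "XI R I = (THE X. partitions R I X \<and> (\<forall>Y. partitions R I Y \<longrightarrow> card X \<le> card Y))"

end

theory Submission
  imports Defs
begin

lemma prefix_ConsD2: "prefix (b # x') y \<Longrightarrow> \<exists>y'. y = b # y' \<and> prefix x' y'"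
  by (cases y) auto

lemma nleaves_pos: "nleaves t \<ge> 1"
  by (induction t) auto

lemma finite_nodes: "finite (nodes t)"
  by (induction t) auto

lemma lvs_sub: "x \<in> nodes t \<Longrightarrow> lvs t k x \<subseteq> {k+1..k+nleaves t}"
proof (induction t arbitrary: k x)
  case Leaf then show ?case by auto
next
  case (Node l r)
  show ?case
  proof (cases x)
    case Nil then show ?thesis by simp
  next
    case (Cons b x')
    then show ?thesis using Node by (cases b) fastforce+
  qed
qed

lemma lvs_ne: "x \<in> nodes t \<Longrightarrow> lvs t k x \<noteq> {}"
proof (induction t arbitrary: k x)
  case Leaf then show ?case by auto
next
  case (Node l r)
  show ?case
  proof (cases x)
    case Nil then show ?thesis using nleaves_pos[of l] by simp
  next
    case (Cons b x')
    then show ?thesis using Node by (cases b) fastforce+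
  qed
qed

lemma nodes_prefix: "y \<in> nodes t \<Longrightarrow> prefix x y \<Longrightarrow> x \<in> nodes t"
proof (induction t arbitrary: x y)
  case Leaf then show ?case by auto
next
  case (Node l r)
  show ?case
  proof (cases x)
    case Nil then show ?thesis by simp
  next
    case (Cons b x')
    have "prefix (b # x') y" using Node.prems(2) Cons by simp
    from prefix_ConsD2[OF this] obtain y' where y: "y = b # y'" "prefix x' y'" by (elim exE conjE)
    show ?thesis
    proof (cases b)
      case True
      then have "y' \<in> nodes r" using Node.prems(1) y by auto
      then show ?thesis using Node.IH(2)[OF _ y(2)] True y Cons by auto
    next
      case False
      then have "y' \<in> nodes l" using Node.prems(1) y by auto
      then show ?thesis using Node.IH(1)[OF _ y(2)] False y Cons by auto
    qed
  qed
qed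

lemma lvs_mono: "y \<in> nodes t \<Longrightarrow> prefix x y \<Longrightarrow> lvs t k y \<subseteq> lvs t k x"
proof (induction t arbitrary: k x y)
  case Leaf then show ?case by auto
next
  case (Node l r)
  show ?case
  proof (cases x)
    case Nil then show ?thesis using lvs_sub[OF Node.prems(1), of k] by simp
  next
    case (Cons b x')
    have "prefix (b # x') y" using Node.prems(2) Cons by simp
    from prefix_ConsD2[OF this] obtain y' where y: "y = b # y'" "prefix x' y'" by (elim exE conjE)
    show ?thesis
    proof (cases b)
      case True
      then have "y' \<in> nodes r" using Node.prems(1) y by auto
      then show ?thesis using Node.IH(2)[OF _ y(2), of "k + nleaves l"] True y Cons by auto
    next
      case False
      then have "y' \<in> nodes l" using Node.prems(1) y by auto
      then show ?thesis using Node.IH(1)[OF _ y(2), of k] False y Cons by auto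
    qed
  qed
qed

lemma lvs_strict: "y \<in> nodes t \<Longrightarrow> strict_prefix x y \<Longrightarrow> lvs t k y \<noteq> lvs t k x"
proof (induction t arbitrary: k x y)
  case Leaf then show ?case by auto
next
  case (Node l r)
  show ?case
  proof (cases x)
    case Nil
    then obtain b y' where y: "y = b # y'" using Node.prems
      by (metis list.exhaust strict_prefix_simps(1))
    show ?thesis
    proof (cases b)
      case True
      then have "y' \<in> nodes r" using Node.prems y by auto
      from lvs_sub[OF this, of "k + nleaves l"] have "k+1 \<notin> lvs (Node l r) k y" 
        using True y Node.prems nleaves_pos[of l] by auto
      moreover have "k+1 \<in> lvs (Node l r) k x" using Nil nleaves_pos[of l] by simp
      ultimately show ?thesis using Node.prems True y by auto
    next
      case False
      then have "y' \<in> nodes l" using Node.prems y by auto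
      from lvs_sub[OF this, of k] have "k + nleaves l + nleaves r \<notin> lvs (Node l r) k y"
        using False y nleaves_pos[of r] by auto
      moreover have "k + nleaves l + nleaves r \<in> lvs (Node l r) k x" using Nil nleaves_pos[of l] by simp
      ultimately show ?thesis by auto
    qed
  next
    case (Cons b x')
    have "prefix x y" "x \<noteq> y" using Node.prems by (auto simp: strict_prefix_def)
    have "prefix (b # x') y" using \<open>prefix x y\<close> Cons by simp
    from prefix_ConsD2[OF this] obtain y' where y0: "y = b # y'" "prefix x' y'" by (elim exE conjE)
    then have y: "y = b # y'" "strict_prefix x' y'" using \<open>x \<noteq> y\<close> Cons
      by (auto simp: strict_prefix_def)
    then show ?thesis using Node Cons by (cases b) auto
  qed
qed

lemma lvs_lam: "x \<in> nodes t \<Longrightarrow> y \<in> nodes t \<Longrightarrow> lvs t k x \<inter> lvs t k y \<noteq> {}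
   \<Longrightarrow> prefix x y \<or> prefix y x"
proof (induction t arbitrary: k x y)
  case Leaf then show ?case by auto
next
  case (Node l r)
  show ?case
  proof (cases x)
    case Nil then show ?thesis by simp
  next
    case (Cons b x')
    show ?thesis
    proof (cases y)
      case Nil then show ?thesis by simp
    next
      case (Cons c y')
      show ?thesis
      proof (cases b; cases c)
        assume "b" "c" then show ?thesis using Node.prems Node.IH(2)[of x' y' "k + nleaves l"] \<open>x = b # x'\<close> Cons by auto
      next
        assume "\<not>b" "\<not>c" then show ?thesis using Node.prems Node.IH(1)[of x' y' k] \<open>x = b # x'\<close> Cons by auto
      next
        assume "b" "\<not>c"
        have "x' \<in> nodes r" "y' \<in> nodes l" using Node.prems \<open>x = b # x'\<close> Cons \<open>b\<close> \<open>\<not>c\<close> by auto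
        from lvs_sub[OF this(1), of "k + nleaves l"] lvs_sub[OF this(2), of k]
        have "lvs r (k + nleaves l) x' \<inter> lvs l k y' \<subseteq> {k + nleaves l + 1..k + nleaves l + nleaves r} \<inter> {k+1..k + nleaves l}" by blast
        moreover have "{k + nleaves l + 1..k + nleaves l + nleaves r} \<inter> {k+1..k + nleaves l} = {}" by auto
        ultimately have "lvs r (k + nleaves l) x' \<inter> lvs l k y' = {}" by blast
        then show ?thesis using Node.prems \<open>x = b # x'\<close> Cons \<open>b\<close> \<open>\<not>c\<close> by auto
      next
        assume "\<not>b" "c"
        have "x' \<in> nodes l" "y' \<in> nodes r" using Node.prems \<open>x = b # x'\<close> Cons \<open>\<not>b\<close> \<open>c\<close> by auto
        from lvs_sub[OF this(2), of "k + nleaves l"] lvs_sub[OF this(1), of k]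
        have "lvs r (k + nleaves l) y' \<inter> lvs l k x' \<subseteq> {k + nleaves l + 1..k + nleaves l + nleaves r} \<inter> {k+1..k + nleaves l}" by blast
        moreover have "{k + nleaves l + 1..k + nleaves l + nleaves r} \<inter> {k+1..k + nleaves l} = {}" by auto
        ultimately have "lvs r (k + nleaves l) y' \<inter> lvs l k x' = {}" by blast
        then show ?thesis using Node.prems \<open>x = b # x'\<close> Cons \<open>\<not>b\<close> \<open>c\<close> by auto
      qed
    qed
  qed
qed

lemma lvs_single: "i \<in> lvs t k [] \<Longrightarrow> \<exists>x\<in>nodes t. lvs t k x = {i}"
proof (induction t arbitrary: k)
  case Leaf then show ?case by auto
next
  case (Node l r)
  show ?case
  proof (cases "i \<le> k + nleaves l")
    case True
    then have "i \<in> lvs l k []" using Node.prems by auto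
    then obtain x where "x \<in> nodes l" "lvs l k x = {i}" using Node.IH(1) by blast
    then show ?thesis by (intro bexI[of _ "False # x"]) auto
  next
    case False
    then have "i \<in> lvs r (k + nleaves l) []" using Node.prems by auto
    then obtain x where "x \<in> nodes r" "lvs r (k + nleaves l) x = {i}" using Node.IH(2) by blast
    then show ?thesis by (intro bexI[of _ "True # x"]) auto
  qed
qed

definition MX :: "btree \<Rightarrow> nat set \<Rightarrow> bool list set" where
  "MX R I = {x \<in> nodes R. leafset R x \<subseteq> I \<and> (\<forall>y. strict_prefix y x \<longrightarrow> \<not> leafset R y \<subseteq> I)}"

lemma MX_exists:
  assumes "i \<in> I" "I \<subseteq> leafset R []"
  shows "\<exists>m\<in>MX R I. i \<in> leafset R m"
proof -
  let ?P = "\<lambda>x. x \<in> nodes R \<and> i \<in> leafset R x \<and> leafset R x \<subseteq> I"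
  have "i \<in> lvs R 0 []" using assms unfolding leafset_def by auto
  from lvs_single[OF this] obtain x0 where "x0 \<in> nodes R" "leafset R x0 = {i}"
    unfolding leafset_def by auto
  then have "?P x0" using assms by auto
  then have "\<exists>m. ?P m \<and> (\<forall>y. ?P y \<longrightarrow> length m \<le> length y)" by (rule ex_has_least_nat)
  then obtain m where m0: "?P m \<and> (\<forall>y. ?P y \<longrightarrow> length m \<le> length y)" by (rule exE)
  have m: "?P m" "\<forall>y. ?P y \<longrightarrow> length m \<le> length y" using m0 by (rule conjunct1, rule conjunct2)
  have "\<forall>y. strict_prefix y m \<longrightarrow> \<not> leafset R y \<subseteq> I"
  proof (intro allI impI notI)
    fix y assume y: "strict_prefix y m" "leafset R y \<subseteq> I"
    have "y \<in> nodes R" using nodes_prefix[of m R y] m(1) y(1) by (simp add: strict_prefix_def)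
    moreover have "i \<in> leafset R y" using lvs_mono[of m R y 0] m(1) y(1)
      unfolding leafset_def by (auto simp: strict_prefix_def)
    ultimately have "length m \<le> length y" using m(2) y(2) by blast
    then show False using prefix_length_less[OF y(1)] by simp
  qed
  then show ?thesis using m(1) unfolding MX_def by blast
qed

lemma MX_part:
  assumes "I \<subseteq> leafset R []"
  shows "partitions R I (MX R I)"
  unfolding partitions_def
proof (intro conjI ballI impI)
  show "MX R I \<subseteq> nodes R" unfolding MX_def by auto
next
  fix x y assume xy: "x \<in> MX R I" "y \<in> MX R I" "x \<noteq> y"
  show "leafset R x \<inter> leafset R y = {}"
  proof (rule ccontr)
    assume "leafset R x \<inter> leafset R y \<noteq> {}"
    then have "prefix x y \<or> prefix y x" using lvs_lam xy unfolding MX_def leafset_def by blast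
    then have "strict_prefix x y \<or> strict_prefix y x" using xy(3) by (auto simp: strict_prefix_def)
    then show False using xy unfolding MX_def by auto
  qed
next
  show "(\<Union>x\<in>MX R I. leafset R x) = I"
  proof
    show "(\<Union>x\<in>MX R I. leafset R x) \<subseteq> I" unfolding MX_def by blast
  next
    show "I \<subseteq> (\<Union>x\<in>MX R I. leafset R x)"
    proof
      fix i assume "i \<in> I"
      from MX_exists[OF this assms] obtain m where "m \<in> MX R I" "i \<in> leafset R m" by blast
      then show "i \<in> (\<Union>x\<in>MX R I. leafset R x)" by blast
    qed
  qed
qed

lemma part_sub: "partitions R I X \<Longrightarrow> x \<in> X \<Longrightarrow> leafset R x \<subseteq> I \<and> x \<in> nodes R"
  unfolding partitions_def by blast

lemma MX_cover:
  assumes "partitions R I X" "m \<in> MX R I" "i \<in> leafset R m"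
  shows "\<exists>x\<in>X. i \<in> leafset R x \<and> prefix m x"
proof -
  have "i \<in> I" using assms unfolding MX_def by auto
  then obtain x where x: "x \<in> X" "i \<in> leafset R x" using assms(1) unfolding partitions_def by blast
  have xn: "x \<in> nodes R" "leafset R x \<subseteq> I" using part_sub[OF assms(1) x(1)] by auto
  have "prefix m x \<or> prefix x m" using lvs_lam[of m R x 0] xn assms x
    unfolding MX_def leafset_def by blast
  moreover have "\<not> strict_prefix x m" using assms(2) xn unfolding MX_def by blast
  ultimately have "prefix m x" by (auto simp: strict_prefix_def)
  then show ?thesis using x by blast
qed

lemma MX_above:
  assumes "I \<subseteq> leafset R []" "partitions R I X" "x \<in> X"
  shows "\<exists>m\<in>MX R I. prefix m x"
proof -
  have xn: "x \<in> nodes R" "leafset R x \<subseteq> I" using part_sub[OF assms(2,3)] by auto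
  then obtain i where i: "i \<in> leafset R x" using lvs_ne unfolding leafset_def by blast
  then obtain m where m: "m \<in> MX R I" "i \<in> leafset R m" using MX_exists[OF _ assms(1)] xn by blast
  have "prefix m x \<or> prefix x m" using lvs_lam[of m R x 0] xn m i
    unfolding MX_def leafset_def by blast
  moreover have "\<not> strict_prefix x m" using m xn unfolding MX_def by blast
  ultimately have "prefix m x" by (auto simp: strict_prefix_def)
  then show ?thesis using m by blast
qed

lemma MX_uniq:
  assumes "m1 \<in> MX R I" "m2 \<in> MX R I" "prefix m1 x" "prefix m2 x"
  shows "m1 = m2"
proof -
  have "prefix m1 m2 \<or> prefix m2 m1" using assms(3,4) prefix_same_cases by blast
  then show ?thesis using assms(1,2) unfolding MX_def by (auto simp: strict_prefix_def)
qed

lemma MX_min: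
  assumes "I \<subseteq> leafset R []" "partitions R I X"
  shows "card (MX R I) \<le> card X" and "card X \<le> card (MX R I) \<Longrightarrow> X = MX R I"
proof -
  define f where "f x = (SOME m. m \<in> MX R I \<and> prefix m x)" for x
  have fX: "f x \<in> MX R I \<and> prefix (f x) x" if xX: "x \<in> X" for x
  proof -
    obtain m where "m \<in> MX R I \<and> prefix m x" using MX_above[OF assms xX] by blast
    then show ?thesis unfolding f_def by (rule someI)
  qed
  have fm: "f x = m" if "x \<in> X" "m \<in> MX R I" "prefix m x" for x m
    using MX_uniq fX that by blast
  have finX: "finite X" using assms(2) finite_nodes[of R] unfolding partitions_def
    using finite_subset by blast
  have cov: "\<exists>x\<in>X. i \<in> leafset R x \<and> f x = m" if "m \<in> MX R I" "i \<in> leafset R m" for m i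
    using MX_cover[OF assms(2) that] fm that(1) by blast
  have img: "f ` X = MX R I"
  proof
    show "f ` X \<subseteq> MX R I" using fX by auto
  next
    show "MX R I \<subseteq> f ` X"
    proof
      fix m assume m: "m \<in> MX R I"
      then obtain i where "i \<in> leafset R m" using lvs_ne unfolding MX_def leafset_def by blast
      then show "m \<in> f ` X" using cov m by force
    qed
  qed
  show c1: "card (MX R I) \<le> card X" using card_image_le[OF finX, of f] img by simp
  assume "card X \<le> card (MX R I)"
  then have ceq: "card (f ` X) = card X" using c1 img by simp
  have inj: "inj_on f X" using eq_card_imp_inj_on[OF finX ceq] .
  have "MX R I \<subseteq> X"
  proof
    fix m assume m: "m \<in> MX R I"
    then obtain i where i: "i \<in> leafset R m" using lvs_ne unfolding MX_def leafset_def by blast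
    then obtain x where x: "x \<in> X" "f x = m" using cov m by blast
    have px: "prefix m x" using fX x by auto
    have xn: "x \<in> nodes R" using part_sub[OF assms(2) x(1)] by auto
    have "leafset R m \<subseteq> leafset R x"
    proof
      fix j assume "j \<in> leafset R m"
      then obtain x' where "x' \<in> X" "j \<in> leafset R x'" "f x' = m" using cov m by blast
      then have "x' = x" using inj x unfolding inj_on_def by metis
      then show "j \<in> leafset R x" using \<open>j \<in> leafset R x'\<close> by simp
    qed
    moreover have "leafset R x \<subseteq> leafset R m" using lvs_mono[OF xn px] unfolding leafset_def by simp
    ultimately have "leafset R x = leafset R m" by blast
    then have "m = x" using lvs_strict[OF xn, of m 0] px unfolding leafset_def
      by (auto simp: strict_prefix_def)
    then show "m \<in> X" using x by simp
  qed
  then show "X = MX R I" using card_subset_eq[OF finX] c1 \<open>card X \<le> card (MX R I)\<close> by (metis le_antisym)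
qed

lemma XI_MX:
  assumes "I \<subseteq> leafset R []"
  shows "XI R I = MX R I"
  unfolding XI_def
proof (rule the_equality)
  show "partitions R I (MX R I) \<and> (\<forall>Y. partitions R I Y \<longrightarrow> card (MX R I) \<le> card Y)"
    using MX_part[OF assms] MX_min(1)[OF assms] by blast
next
  fix X assume "partitions R I X \<and> (\<forall>Y. partitions R I Y \<longrightarrow> card X \<le> card Y)"
  then show "X = MX R I" using MX_min(2)[OF assms] MX_part[OF assms] by blast
qed

theorem lemma4p4:
  fixes R T :: btree and n :: nat and p s a b :: "bool list"
  assumes "n \<ge> 2"
    and "complete R" and "nleaves R = n"
    and "nleaves T = n"
    and "p \<in> nodes T" and "s \<in> nodes T" and "p \<noteq> s"
    and "a \<in> nodes R" and "b \<in> nodes R"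
    and "a \<in> XI R (leafset T p)" and "b \<in> XI R (leafset T s)"
  shows "(prefix a b \<longrightarrow> prefix p s \<or> prefix s p) \<and>
         (strict_prefix a b \<longrightarrow> strict_prefix p s)"
proof -
  have sub: "leafset T x \<subseteq> leafset R []" if "x \<in> nodes T" for x
    using lvs_mono[OF that, of "[]" 0] assms(3,4) unfolding leafset_def by simp
  have aM: "a \<in> MX R (leafset T p)" using assms(10) XI_MX[OF sub[OF assms(5)]] by simp
  have bM: "b \<in> MX R (leafset T s)" using assms(11) XI_MX[OF sub[OF assms(6)]] by simp
  have P1: "prefix p s \<or> prefix s p" if ab: "prefix a b"
  proof -
    have "leafset R b \<subseteq> leafset R a" using lvs_mono[OF assms(9) ab] unfolding leafset_def .
    moreover have "leafset R b \<noteq> {}" using lvs_ne[OF assms(9)] unfolding leafset_def .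
    ultimately have "leafset T p \<inter> leafset T s \<noteq> {}" using aM bM unfolding MX_def by blast
    then show ?thesis using lvs_lam[OF assms(5,6)] unfolding leafset_def by blast
  qed
  moreover have "strict_prefix p s" if ab: "strict_prefix a b"
  proof (rule ccontr)
    assume "\<not> strict_prefix p s"
    then have "strict_prefix s p" using P1 ab assms(7) by (auto simp: strict_prefix_def)
    then have "leafset T p \<subseteq> leafset T s" using lvs_mono[OF assms(5)] unfolding leafset_def
      by (auto simp: strict_prefix_def)
    then have "leafset R a \<subseteq> leafset T s" using aM unfolding MX_def by blast
    then show False using bM ab unfolding MX_def by blast
  qed
  ultimately show ?thesis by (auto simp: strict_prefix_def)
qed

end
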